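(* The full subcategory $\overline{\square}_\vee$ of $\mathbf{SLat}$ is closed under retracts in $\mathbf{SLat}$: if $B \in \mathbf{SLat}$ is a retract (in $\mathbf{SLat}$) of some $A \in \overline{\square}_\vee$, then $B \in \overline{\square}_\vee$.
   Context: $\mathbf{SLat}$ is the category of (join-)semilattices—sets with an associative, commutative, idempotent binary operation $\vee$—and homomorphisms preserving $\vee$ (not necessarily preserving any bounds or meets). Each semilattice is a poset via $x\le y\iff x\vee y=y$. $\overline{\square}_\vee$ is the full subcategory of $\mathbf{SLat}$ on the finite inhabited semilattices whose induced poset is a distributive lattice. *)

theory Defs
  imports Main
begin

definition semilattice_on :: "'a set \<Rightarrow> ('a \<Rightarrow> 'a \<Rightarrow> 'a) \<Rightarrow> bool" where
  "semilattice_on S j \<longleftrightarrow>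
     (\<forall>x\<in>S. \<forall>y\<in>S. j x y \<in> S) \<and>
     (\<forall>x\<in>S. \<forall>y\<in>S. \<forall>z\<in>S. j (j x y) z = j x (j y z)) \<and>
     (\<forall>x\<in>S. \<forall>y\<in>S. j x y = j y x) \<and>
     (\<forall>x\<in>S. j x x = x)"

definition sl_le :: "('a \<Rightarrow> 'a \<Rightarrow> 'a) \<Rightarrow> 'a \<Rightarrow> 'a \<Rightarrow> bool" where
  "sl_le j x y \<longleftrightarrow> j x y = y"

definition is_glb :: "'a set \<Rightarrow> ('a \<Rightarrow> 'a \<Rightarrow> 'a) \<Rightarrow> 'a \<Rightarrow> 'a \<Rightarrow> 'a \<Rightarrow> bool" where
  "is_glb S j x y m \<longleftrightarrow> m \<in> S \<and> sl_le j m x \<and> sl_le j m y \<and>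
     (\<forall>z\<in>S. sl_le j z x \<and> sl_le j z y \<longrightarrow> sl_le j z m)"

definition sl_hom :: "'a set \<Rightarrow> ('a \<Rightarrow> 'a \<Rightarrow> 'a) \<Rightarrow> 'b set \<Rightarrow> ('b \<Rightarrow> 'b \<Rightarrow> 'b) \<Rightarrow> ('a \<Rightarrow> 'b) \<Rightarrow> bool" where
  "sl_hom S j T k f \<longleftrightarrow> (\<forall>x\<in>S. f x \<in> T) \<and> (\<forall>x\<in>S. \<forall>y\<in>S. f (j x y) = k (f x) (f y))"

definition sl_retract :: "'b set \<Rightarrow> ('b \<Rightarrow> 'b \<Rightarrow> 'b) \<Rightarrow> 'a set \<Rightarrow> ('a \<Rightarrow> 'a \<Rightarrow> 'a) \<Rightarrow> bool" where
  "sl_retract B k A j \<longleftrightarrow>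
     (\<exists>s r. sl_hom B k A j s \<and> sl_hom A j B k r \<and> (\<forall>x\<in>B. r (s x) = x))"

(* Objects of the full subcategory: finite inhabited semilattices whose induced
   poset is a distributive lattice (binary meets exist and meet distributes over join). *)
definition in_box_vee :: "'a set \<Rightarrow> ('a \<Rightarrow> 'a \<Rightarrow> 'a) \<Rightarrow> bool" where
  "in_box_vee S j \<longleftrightarrow> semilattice_on S j \<and> finite S \<and> S \<noteq> {} \<and>
     (\<exists>m. (\<forall>x\<in>S. \<forall>y\<in>S. is_glb S j x y (m x y)) \<and>
          (\<forall>x\<in>S. \<forall>y\<in>S. \<forall>z\<in>S. m x (j y z) = j (m x y) (m x z)))"

end

theory Submission
  imports Defs
begin

theorem mainTheorem5:
  fixes A :: "'a set" and j :: "'a \<Rightarrow> 'a \<Rightarrow> 'a"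
    and B :: "'b set" and k :: "'b \<Rightarrow> 'b \<Rightarrow> 'b"
  assumes "in_box_vee A j"
    and "semilattice_on B k"
    and "sl_retract B k A j"
  shows "in_box_vee B k"
proof -
  obtain s r where hs: "sl_hom B k A j s" and hr: "sl_hom A j B k r" and rs: "\<forall>x\<in>B. r (s x) = x"
    using assms(3) unfolding sl_retract_def by blast
  obtain m where mg: "\<forall>x\<in>A. \<forall>y\<in>A. is_glb A j x y (m x y)"
    and md: "\<forall>x\<in>A. \<forall>y\<in>A. \<forall>z\<in>A. m x (j y z) = j (m x y) (m x z)"
    and fA: "finite A" and neA: "A \<noteq> {}"
    using assms(1) unfolding in_box_vee_def by blast
  have sA: "\<And>x. x \<in> B \<Longrightarrow> s x \<in> A" using hs unfolding sl_hom_def by blast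
  have rB: "\<And>x. x \<in> A \<Longrightarrow> r x \<in> B" using hr unfolding sl_hom_def by blast
  have sj: "\<And>x y. x \<in> B \<Longrightarrow> y \<in> B \<Longrightarrow> s (k x y) = j (s x) (s y)" using hs unfolding sl_hom_def by blast
  have rj: "\<And>x y. x \<in> A \<Longrightarrow> y \<in> A \<Longrightarrow> r (j x y) = k (r x) (r y)" using hr unfolding sl_hom_def by blast
  have rmono: "\<And>x y. x \<in> A \<Longrightarrow> y \<in> A \<Longrightarrow> sl_le j x y \<Longrightarrow> sl_le k (r x) (r y)"
    by (metis rj sl_le_def)
  have smono: "\<And>x y. x \<in> B \<Longrightarrow> y \<in> B \<Longrightarrow> sl_le k x y \<Longrightarrow> sl_le j (s x) (s y)"
    by (metis sj sl_le_def)
  have mA: "\<And>x y. x \<in> A \<Longrightarrow> y \<in> A \<Longrightarrow> m x y \<in> A" using mg unfolding is_glb_def by blast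
  have BrA: "B = r ` A"
  proof
    show "B \<subseteq> r ` A" using rs sA by (metis image_eqI subsetI)
    show "r ` A \<subseteq> B" using rB by blast
  qed
  have fB: "finite B" using BrA fA by simp
  have neB: "B \<noteq> {}" using BrA neA by simp
  define mB where "mB = (\<lambda>x y. r (m (s x) (s y)))"
  have glb: "\<forall>x\<in>B. \<forall>y\<in>B. is_glb B k x y (mB x y)"
  proof (intro ballI)
    fix x y assume x: "x \<in> B" and y: "y \<in> B"
    have g: "is_glb A j (s x) (s y) (m (s x) (s y))" using mg sA x y by blast
    have mm: "m (s x) (s y) \<in> A" using mA sA x y by blast
    have 1: "sl_le k (mB x y) x" unfolding mB_def
      using rmono[OF mm sA[OF x]] g rs x unfolding is_glb_def by metis
    have 2: "sl_le k (mB x y) y" unfolding mB_def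
      using rmono[OF mm sA[OF y]] g rs y unfolding is_glb_def by metis
    have 3: "\<forall>z\<in>B. sl_le k z x \<and> sl_le k z y \<longrightarrow> sl_le k z (mB x y)"
    proof (intro ballI impI)
      fix z assume z: "z \<in> B" and h: "sl_le k z x \<and> sl_le k z y"
      have "sl_le j (s z) (m (s x) (s y))"
        using g smono[OF z x] smono[OF z y] h sA[OF z] unfolding is_glb_def by blast
      then have "sl_le k (r (s z)) (mB x y)" unfolding mB_def using rmono sA[OF z] mm by blast
      then show "sl_le k z (mB x y)" using rs z by simp
    qed
    show "is_glb B k x y (mB x y)" unfolding is_glb_def
      using 1 2 3 rB mm unfolding mB_def by blast
  qed
  have dist: "\<forall>x\<in>B. \<forall>y\<in>B. \<forall>z\<in>B. mB x (k y z) = k (mB x y) (mB x z)"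
  proof (intro ballI)
    fix x y z assume x: "x \<in> B" and y: "y \<in> B" and z: "z \<in> B"
    have "mB x (k y z) = r (m (s x) (j (s y) (s z)))" unfolding mB_def using sj y z by simp
    also have "\<dots> = r (j (m (s x) (s y)) (m (s x) (s z)))" using md sA x y z by simp
    also have "\<dots> = k (mB x y) (mB x z)" unfolding mB_def using rj mA sA x y z by simp
    finally show "mB x (k y z) = k (mB x y) (mB x z)" .
  qed
  show ?thesis unfolding in_box_vee_def using assms(2) fB neB glb dist by blast
qed

end
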